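(* Let $\Pi$ be the set of graphs $G$ satisfying $\sum_{H:|V(H)|=4} w_H\cdot p(H,G)\le \frac{5}{16}$, where $w_{K_4}=1$, $w_{\bar{K_4}}=\frac12$, $w_{D_4}=\frac{5}{12}$, $w_{\bar{D_4}}=\frac{5}{12}$, $w_{P_3}=\frac13$, $w_{\bar{P_3}}=\frac16$, $w_{C_4}=\frac12$, $w_{\bar{C_4}}=\frac13$, $w_{K_{1,3}}=\frac14$, $w_{\bar{K_{1,3}}}=\frac14$, $w_{P_4}=\frac14$. Then for every $n\ge1$, every $n$-vertex graph $G\in\Pi$ is $\delta$-quasirandom with $\delta=O(n^{-1/24})$ (the implied constant being absolute).
   Context: $K_4$ is the complete graph on 4 vertices, $D_4$ is $K_4$ minus an edge, $P_3$ is the 4-vertex graph consisting of a path on 3 vertices plus an isolated vertex, $C_4$ the 4-cycle, $P_4$ the path on 4 vertices, $K_{1,3}$ the star on 4 vertices, and $\bar H$ the complement of $H$. $p(H,G)$ is the fraction of induced subgraphs of $G$ on $|V(H)|$ vertices isomorphic to $H$. An $n$-vertex graph $G$ is $\delta$-quasirandom (with density $1/2$) if for every pair of disjoint sets $U,V\subseteq V(G)$ with $|U|,|V|\ge\delta n$, the number of edges between $U$ and $V$ satisfies $e(U,V)\in[(\frac12-\delta)|U||V|,(\frac12+\delta)|U||V|]$. *)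

theory Defs
  imports Complex_Main
begin

text \<open>Graphs on n vertices are represented with vertex set {0..<n} (every n-vertex
graph is isomorphic to one of these) and a symmetric irreflexive edge relation.\<close>

definition simple_graph :: "(nat \<Rightarrow> nat \<Rightarrow> bool) \<Rightarrow> bool" where
  "simple_graph E \<longleftrightarrow> (\<forall>x y. E x y = E y x) \<and> (\<forall>x. \<not> E x x)"

definition gcompl :: "(nat \<Rightarrow> nat \<Rightarrow> bool) \<Rightarrow> nat \<Rightarrow> nat \<Rightarrow> bool" where
  "gcompl H i j \<longleftrightarrow> i \<noteq> j \<and> \<not> H i j"

definition edges_graph :: "(nat \<times> nat) set \<Rightarrow> nat \<Rightarrow> nat \<Rightarrow> bool" where
  "edges_graph S i j \<longleftrightarrow> (i, j) \<in> S \<or> (j, i) \<in> S"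

definition K4 :: "nat \<Rightarrow> nat \<Rightarrow> bool" where
  "K4 = edges_graph {(0,1),(0,2),(0,3),(1,2),(1,3),(2,3)}"
definition D4 :: "nat \<Rightarrow> nat \<Rightarrow> bool" where
  "D4 = edges_graph {(0,2),(0,3),(1,2),(1,3),(2,3)}"
definition P3 :: "nat \<Rightarrow> nat \<Rightarrow> bool" where
  "P3 = edges_graph {(0,1),(1,2)}"
definition C4 :: "nat \<Rightarrow> nat \<Rightarrow> bool" where
  "C4 = edges_graph {(0,1),(1,2),(2,3),(3,0)}"
definition P4 :: "nat \<Rightarrow> nat \<Rightarrow> bool" where
  "P4 = edges_graph {(0,1),(1,2),(2,3)}"
definition K13 :: "nat \<Rightarrow> nat \<Rightarrow> bool" where
  "K13 = edges_graph {(0,1),(0,2),(0,3)}"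

definition induced_copy :: "(nat \<Rightarrow> nat \<Rightarrow> bool) \<Rightarrow> nat \<Rightarrow> (nat \<Rightarrow> nat \<Rightarrow> bool) \<Rightarrow> nat set \<Rightarrow> bool" where
  "induced_copy H k E S \<longleftrightarrow>
     (\<exists>f. bij_betw f S {0..<k} \<and> (\<forall>x\<in>S. \<forall>y\<in>S. E x y \<longleftrightarrow> H (f x) (f y)))"

definition p4 :: "(nat \<Rightarrow> nat \<Rightarrow> bool) \<Rightarrow> nat \<Rightarrow> (nat \<Rightarrow> nat \<Rightarrow> bool) \<Rightarrow> real" where
  "p4 H n E = real (card {S. S \<subseteq> {0..<n} \<and> card S = 4 \<and> induced_copy H 4 E S})
              / real (n choose 4)"

definition weighted_sum :: "nat \<Rightarrow> (nat \<Rightarrow> nat \<Rightarrow> bool) \<Rightarrow> real" where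
  "weighted_sum n E =
      1 * p4 K4 n E + 1/2 * p4 (gcompl K4) n E
    + 5/12 * p4 D4 n E + 5/12 * p4 (gcompl D4) n E
    + 1/3 * p4 P3 n E + 1/6 * p4 (gcompl P3) n E
    + 1/2 * p4 C4 n E + 1/3 * p4 (gcompl C4) n E
    + 1/4 * p4 K13 n E + 1/4 * p4 (gcompl K13) n E
    + 1/4 * p4 P4 n E"

definition in_Pi :: "nat \<Rightarrow> (nat \<Rightarrow> nat \<Rightarrow> bool) \<Rightarrow> bool" where
  "in_Pi n E \<longleftrightarrow> weighted_sum n E \<le> 5/16"

definition e_between :: "(nat \<Rightarrow> nat \<Rightarrow> bool) \<Rightarrow> nat set \<Rightarrow> nat set \<Rightarrow> nat" where
  "e_between E U W = card {(u, w). u \<in> U \<and> w \<in> W \<and> E u w}"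

definition quasirandom :: "real \<Rightarrow> nat \<Rightarrow> (nat \<Rightarrow> nat \<Rightarrow> bool) \<Rightarrow> bool" where
  "quasirandom \<delta> n E \<longleftrightarrow>
     (\<forall>U W. U \<subseteq> {0..<n} \<and> W \<subseteq> {0..<n} \<and> U \<inter> W = {}
        \<and> real (card U) \<ge> \<delta> * real n \<and> real (card W) \<ge> \<delta> * real n \<longrightarrow>
        (1/2 - \<delta>) * real (card U) * real (card W) \<le> real (e_between E U W) \<and>
        real (e_between E U W) \<le> (1/2 + \<delta>) * real (card U) * real (card W))"

end

theory Submission
  imports Defs "HOL-Combinatorics.Multiset_Permutations"
begin

definition Am :: "(nat \<Rightarrow> nat \<Rightarrow> bool) \<Rightarrow> nat \<Rightarrow> nat \<Rightarrow> real" where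
  "Am E u v = (if u = v then 0 else if E u v then 1 else -1)"

definition Qf :: "(nat \<Rightarrow> nat \<Rightarrow> bool) \<Rightarrow> nat \<Rightarrow> nat \<Rightarrow> nat \<Rightarrow> nat \<Rightarrow> real" where
  "Qf E a b c d = 1/96 * (Am E a b * Am E b c) + 1/192 * (Am E a b * Am E c d)
     + 1/96 * (Am E a b * Am E b c * Am E c d) + 1/384 * (Am E a b * Am E b c * Am E c d * Am E d a)"

definition Qs :: "(nat \<Rightarrow> nat \<Rightarrow> bool) \<Rightarrow> nat \<Rightarrow> nat \<Rightarrow> nat \<Rightarrow> nat \<Rightarrow> real" where
  "Qs E a b c d = Qf E a b c d + Qf E a b d c + Qf E a c b d + Qf E a c d b + Qf E a d b c + Qf E a d c b + Qf E b a c d + Qf E b a d c + Qf E b c a d + Qf E b c d a + Qf E b d a c + Qf E b d c a + Qf E c a b d + Qf E c a d b + Qf E c b a d + Qf E c b d a + Qf E c d a b + Qf E c d b a + Qf E d a b c + Qf E d a c b + Qf E d b a c + Qf E d b c a + Qf E d c a b + Qf E d c b a"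

definition ind :: "bool \<Rightarrow> real" where "ind P = (if P then 1 else 0)"

lemma ind_nonneg: "0 \<le> ind P" by (simp add: ind_def)

definition wS :: "(nat \<Rightarrow> nat \<Rightarrow> bool) \<Rightarrow> nat set \<Rightarrow> real" where
  "wS E S = 1 * ind (induced_copy (K4) 4 E S) + 1/2 * ind (induced_copy (gcompl K4) 4 E S) + 5/12 * ind (induced_copy (D4) 4 E S) + 5/12 * ind (induced_copy (gcompl D4) 4 E S) + 1/3 * ind (induced_copy (P3) 4 E S) + 1/6 * ind (induced_copy (gcompl P3) 4 E S) + 1/2 * ind (induced_copy (C4) 4 E S) + 1/3 * ind (induced_copy (gcompl C4) 4 E S) + 1/4 * ind (induced_copy (K13) 4 E S) + 1/4 * ind (induced_copy (gcompl K13) 4 E S) + 1/4 * ind (induced_copy (P4) 4 E S)"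

lemma wS_ge0: assumes "induced_copy (K4) 4 E S" shows "1 \<le> wS E S"
proof -
  have "ind (induced_copy (K4) 4 E S) = 1" using assms by (simp add: ind_def)
  then show ?thesis unfolding wS_def using ind_nonneg[of "induced_copy (K4) 4 E S"] ind_nonneg[of "induced_copy (gcompl K4) 4 E S"] ind_nonneg[of "induced_copy (D4) 4 E S"] ind_nonneg[of "induced_copy (gcompl D4) 4 E S"] ind_nonneg[of "induced_copy (P3) 4 E S"] ind_nonneg[of "induced_copy (gcompl P3) 4 E S"] ind_nonneg[of "induced_copy (C4) 4 E S"] ind_nonneg[of "induced_copy (gcompl C4) 4 E S"] ind_nonneg[of "induced_copy (K13) 4 E S"] ind_nonneg[of "induced_copy (gcompl K13) 4 E S"] ind_nonneg[of "induced_copy (P4) 4 E S"] by linarith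
qed

lemma wS_ge1: assumes "induced_copy (gcompl K4) 4 E S" shows "1/2 \<le> wS E S"
proof -
  have "ind (induced_copy (gcompl K4) 4 E S) = 1" using assms by (simp add: ind_def)
  then show ?thesis unfolding wS_def using ind_nonneg[of "induced_copy (K4) 4 E S"] ind_nonneg[of "induced_copy (gcompl K4) 4 E S"] ind_nonneg[of "induced_copy (D4) 4 E S"] ind_nonneg[of "induced_copy (gcompl D4) 4 E S"] ind_nonneg[of "induced_copy (P3) 4 E S"] ind_nonneg[of "induced_copy (gcompl P3) 4 E S"] ind_nonneg[of "induced_copy (C4) 4 E S"] ind_nonneg[of "induced_copy (gcompl C4) 4 E S"] ind_nonneg[of "induced_copy (K13) 4 E S"] ind_nonneg[of "induced_copy (gcompl K13) 4 E S"] ind_nonneg[of "induced_copy (P4) 4 E S"] by linarith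
qed

lemma wS_ge2: assumes "induced_copy (D4) 4 E S" shows "5/12 \<le> wS E S"
proof -
  have "ind (induced_copy (D4) 4 E S) = 1" using assms by (simp add: ind_def)
  then show ?thesis unfolding wS_def using ind_nonneg[of "induced_copy (K4) 4 E S"] ind_nonneg[of "induced_copy (gcompl K4) 4 E S"] ind_nonneg[of "induced_copy (D4) 4 E S"] ind_nonneg[of "induced_copy (gcompl D4) 4 E S"] ind_nonneg[of "induced_copy (P3) 4 E S"] ind_nonneg[of "induced_copy (gcompl P3) 4 E S"] ind_nonneg[of "induced_copy (C4) 4 E S"] ind_nonneg[of "induced_copy (gcompl C4) 4 E S"] ind_nonneg[of "induced_copy (K13) 4 E S"] ind_nonneg[of "induced_copy (gcompl K13) 4 E S"] ind_nonneg[of "induced_copy (P4) 4 E S"] by linarith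
qed

lemma wS_ge3: assumes "induced_copy (gcompl D4) 4 E S" shows "5/12 \<le> wS E S"
proof -
  have "ind (induced_copy (gcompl D4) 4 E S) = 1" using assms by (simp add: ind_def)
  then show ?thesis unfolding wS_def using ind_nonneg[of "induced_copy (K4) 4 E S"] ind_nonneg[of "induced_copy (gcompl K4) 4 E S"] ind_nonneg[of "induced_copy (D4) 4 E S"] ind_nonneg[of "induced_copy (gcompl D4) 4 E S"] ind_nonneg[of "induced_copy (P3) 4 E S"] ind_nonneg[of "induced_copy (gcompl P3) 4 E S"] ind_nonneg[of "induced_copy (C4) 4 E S"] ind_nonneg[of "induced_copy (gcompl C4) 4 E S"] ind_nonneg[of "induced_copy (K13) 4 E S"] ind_nonneg[of "induced_copy (gcompl K13) 4 E S"] ind_nonneg[of "induced_copy (P4) 4 E S"] by linarith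
qed

lemma wS_ge4: assumes "induced_copy (P3) 4 E S" shows "1/3 \<le> wS E S"
proof -
  have "ind (induced_copy (P3) 4 E S) = 1" using assms by (simp add: ind_def)
  then show ?thesis unfolding wS_def using ind_nonneg[of "induced_copy (K4) 4 E S"] ind_nonneg[of "induced_copy (gcompl K4) 4 E S"] ind_nonneg[of "induced_copy (D4) 4 E S"] ind_nonneg[of "induced_copy (gcompl D4) 4 E S"] ind_nonneg[of "induced_copy (P3) 4 E S"] ind_nonneg[of "induced_copy (gcompl P3) 4 E S"] ind_nonneg[of "induced_copy (C4) 4 E S"] ind_nonneg[of "induced_copy (gcompl C4) 4 E S"] ind_nonneg[of "induced_copy (K13) 4 E S"] ind_nonneg[of "induced_copy (gcompl K13) 4 E S"] ind_nonneg[of "induced_copy (P4) 4 E S"] by linarith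
qed

lemma wS_ge5: assumes "induced_copy (gcompl P3) 4 E S" shows "1/6 \<le> wS E S"
proof -
  have "ind (induced_copy (gcompl P3) 4 E S) = 1" using assms by (simp add: ind_def)
  then show ?thesis unfolding wS_def using ind_nonneg[of "induced_copy (K4) 4 E S"] ind_nonneg[of "induced_copy (gcompl K4) 4 E S"] ind_nonneg[of "induced_copy (D4) 4 E S"] ind_nonneg[of "induced_copy (gcompl D4) 4 E S"] ind_nonneg[of "induced_copy (P3) 4 E S"] ind_nonneg[of "induced_copy (gcompl P3) 4 E S"] ind_nonneg[of "induced_copy (C4) 4 E S"] ind_nonneg[of "induced_copy (gcompl C4) 4 E S"] ind_nonneg[of "induced_copy (K13) 4 E S"] ind_nonneg[of "induced_copy (gcompl K13) 4 E S"] ind_nonneg[of "induced_copy (P4) 4 E S"] by linarith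
qed

lemma wS_ge6: assumes "induced_copy (C4) 4 E S" shows "1/2 \<le> wS E S"
proof -
  have "ind (induced_copy (C4) 4 E S) = 1" using assms by (simp add: ind_def)
  then show ?thesis unfolding wS_def using ind_nonneg[of "induced_copy (K4) 4 E S"] ind_nonneg[of "induced_copy (gcompl K4) 4 E S"] ind_nonneg[of "induced_copy (D4) 4 E S"] ind_nonneg[of "induced_copy (gcompl D4) 4 E S"] ind_nonneg[of "induced_copy (P3) 4 E S"] ind_nonneg[of "induced_copy (gcompl P3) 4 E S"] ind_nonneg[of "induced_copy (C4) 4 E S"] ind_nonneg[of "induced_copy (gcompl C4) 4 E S"] ind_nonneg[of "induced_copy (K13) 4 E S"] ind_nonneg[of "induced_copy (gcompl K13) 4 E S"] ind_nonneg[of "induced_copy (P4) 4 E S"] by linarith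
qed

lemma wS_ge7: assumes "induced_copy (gcompl C4) 4 E S" shows "1/3 \<le> wS E S"
proof -
  have "ind (induced_copy (gcompl C4) 4 E S) = 1" using assms by (simp add: ind_def)
  then show ?thesis unfolding wS_def using ind_nonneg[of "induced_copy (K4) 4 E S"] ind_nonneg[of "induced_copy (gcompl K4) 4 E S"] ind_nonneg[of "induced_copy (D4) 4 E S"] ind_nonneg[of "induced_copy (gcompl D4) 4 E S"] ind_nonneg[of "induced_copy (P3) 4 E S"] ind_nonneg[of "induced_copy (gcompl P3) 4 E S"] ind_nonneg[of "induced_copy (C4) 4 E S"] ind_nonneg[of "induced_copy (gcompl C4) 4 E S"] ind_nonneg[of "induced_copy (K13) 4 E S"] ind_nonneg[of "induced_copy (gcompl K13) 4 E S"] ind_nonneg[of "induced_copy (P4) 4 E S"] by linarith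
qed

lemma wS_ge8: assumes "induced_copy (K13) 4 E S" shows "1/4 \<le> wS E S"
proof -
  have "ind (induced_copy (K13) 4 E S) = 1" using assms by (simp add: ind_def)
  then show ?thesis unfolding wS_def using ind_nonneg[of "induced_copy (K4) 4 E S"] ind_nonneg[of "induced_copy (gcompl K4) 4 E S"] ind_nonneg[of "induced_copy (D4) 4 E S"] ind_nonneg[of "induced_copy (gcompl D4) 4 E S"] ind_nonneg[of "induced_copy (P3) 4 E S"] ind_nonneg[of "induced_copy (gcompl P3) 4 E S"] ind_nonneg[of "induced_copy (C4) 4 E S"] ind_nonneg[of "induced_copy (gcompl C4) 4 E S"] ind_nonneg[of "induced_copy (K13) 4 E S"] ind_nonneg[of "induced_copy (gcompl K13) 4 E S"] ind_nonneg[of "induced_copy (P4) 4 E S"] by linarith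
qed

lemma wS_ge9: assumes "induced_copy (gcompl K13) 4 E S" shows "1/4 \<le> wS E S"
proof -
  have "ind (induced_copy (gcompl K13) 4 E S) = 1" using assms by (simp add: ind_def)
  then show ?thesis unfolding wS_def using ind_nonneg[of "induced_copy (K4) 4 E S"] ind_nonneg[of "induced_copy (gcompl K4) 4 E S"] ind_nonneg[of "induced_copy (D4) 4 E S"] ind_nonneg[of "induced_copy (gcompl D4) 4 E S"] ind_nonneg[of "induced_copy (P3) 4 E S"] ind_nonneg[of "induced_copy (gcompl P3) 4 E S"] ind_nonneg[of "induced_copy (C4) 4 E S"] ind_nonneg[of "induced_copy (gcompl C4) 4 E S"] ind_nonneg[of "induced_copy (K13) 4 E S"] ind_nonneg[of "induced_copy (gcompl K13) 4 E S"] ind_nonneg[of "induced_copy (P4) 4 E S"] by linarith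
qed

lemma wS_ge10: assumes "induced_copy (P4) 4 E S" shows "1/4 \<le> wS E S"
proof -
  have "ind (induced_copy (P4) 4 E S) = 1" using assms by (simp add: ind_def)
  then show ?thesis unfolding wS_def using ind_nonneg[of "induced_copy (K4) 4 E S"] ind_nonneg[of "induced_copy (gcompl K4) 4 E S"] ind_nonneg[of "induced_copy (D4) 4 E S"] ind_nonneg[of "induced_copy (gcompl D4) 4 E S"] ind_nonneg[of "induced_copy (P3) 4 E S"] ind_nonneg[of "induced_copy (gcompl P3) 4 E S"] ind_nonneg[of "induced_copy (C4) 4 E S"] ind_nonneg[of "induced_copy (gcompl C4) 4 E S"] ind_nonneg[of "induced_copy (K13) 4 E S"] ind_nonneg[of "induced_copy (gcompl K13) 4 E S"] ind_nonneg[of "induced_copy (P4) 4 E S"] by linarith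
qed

lemma ic4:
  assumes E: "simple_graph E" and d: "a \<noteq> b" "a \<noteq> c" "a \<noteq> d" "b \<noteq> c" "b \<noteq> d" "c \<noteq> d"
    and ijkl: "distinct [i,j,k,l]" "i < 4" "j < 4" "k < 4" "l < 4"
    and irr: "\<not> H i i" "\<not> H j j" "\<not> H k k" "\<not> H l l"
    and h: "H i j = E a b" "H j i = E a b" "H i k = E a c" "H k i = E a c"
      "H i l = E a d" "H l i = E a d" "H j k = E b c" "H k j = E b c"
      "H j l = E b d" "H l j = E b d" "H k l = E c d" "H l k = E c d"
  shows "induced_copy H 4 E {a,b,c,d}"
proof -
  have sym: "\<And>x y. E x y = E y x" and irrE: "\<And>x. \<not> E x x" using E by (auto simp: simple_graph_def)
  define f where "f = (\<lambda>x. if x = a then i else if x = b then j else if x = c then k else l)"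
  have fa: "f a = i" "f b = j" "f c = k" "f d = l" using d by (auto simp: f_def)
  have inj: "inj_on f {a,b,c,d}" using ijkl fa unfolding inj_on_def by auto
  have sub: "{i,j,k,l} \<subseteq> {0..<4::nat}" using ijkl by auto
  have "card {i,j,k,l} = 4" using ijkl by simp
  then have "{i,j,k,l} = {0..<4::nat}" using sub by (metis card_atLeastLessThan card_subset_eq finite_atLeastLessThan diff_zero)
  then have img: "f ` {a,b,c,d} = {0..<4}" using fa by simp
  have bij: "bij_betw f {a,b,c,d} {0..<4}" using inj img by (simp add: bij_betw_def)
  have "\<forall>x\<in>{a,b,c,d}. \<forall>y\<in>{a,b,c,d}. E x y \<longleftrightarrow> H (f x) (f y)"
    using fa irr h irrE sym by auto
  then show ?thesis unfolding induced_copy_def using bij by blast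
qed

lemma pointwise:
  assumes E: "simple_graph E" and d: "a \<noteq> b" "a \<noteq> c" "a \<noteq> d" "b \<noteq> c" "b \<noteq> d" "c \<noteq> d"
  shows "5/16 + Qs E a b c d \<le> wS E {a,b,c,d}"
proof -
  have sym: "\<And>x y. E x y = E y x" and irr: "\<And>x. \<not> E x x" using E by (auto simp: simple_graph_def)
  show ?thesis
  apply (cases "E a b"; cases "E a c"; cases "E a d"; cases "E b c"; cases "E b d"; cases "E c d")
    subgoal apply (rule order_trans[OF _ wS_ge0[OF ic4[OF E d, of 0 1 2 3]]])
      by (simp_all add: Qs_def Qf_def Am_def d d[THEN not_sym] sym irr K4_def D4_def P3_def C4_def P4_def K13_def gcompl_def edges_graph_def)
    subgoal apply (rule order_trans[OF _ wS_ge2[OF ic4[OF E d, of 2 3 0 1]]])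
      by (simp_all add: Qs_def Qf_def Am_def d d[THEN not_sym] sym irr K4_def D4_def P3_def C4_def P4_def K13_def gcompl_def edges_graph_def)
    subgoal apply (rule order_trans[OF _ wS_ge2[OF ic4[OF E d, of 2 0 3 1]]])
      by (simp_all add: Qs_def Qf_def Am_def d d[THEN not_sym] sym irr K4_def D4_def P3_def C4_def P4_def K13_def gcompl_def edges_graph_def)
    subgoal apply (rule order_trans[OF _ wS_ge5[OF ic4[OF E d, of 3 0 2 1]]])
      by (simp_all add: Qs_def Qf_def Am_def d d[THEN not_sym] sym irr K4_def D4_def P3_def C4_def P4_def K13_def gcompl_def edges_graph_def)
    subgoal apply (rule order_trans[OF _ wS_ge2[OF ic4[OF E d, of 2 0 1 3]]])
      by (simp_all add: Qs_def Qf_def Am_def d d[THEN not_sym] sym irr K4_def D4_def P3_def C4_def P4_def K13_def gcompl_def edges_graph_def)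
    subgoal apply (rule order_trans[OF _ wS_ge5[OF ic4[OF E d, of 3 0 1 2]]])
      by (simp_all add: Qs_def Qf_def Am_def d d[THEN not_sym] sym irr K4_def D4_def P3_def C4_def P4_def K13_def gcompl_def edges_graph_def)
    subgoal apply (rule order_trans[OF _ wS_ge5[OF ic4[OF E d, of 3 1 0 2]]])
      by (simp_all add: Qs_def Qf_def Am_def d d[THEN not_sym] sym irr K4_def D4_def P3_def C4_def P4_def K13_def gcompl_def edges_graph_def)
    subgoal apply (rule order_trans[OF _ wS_ge8[OF ic4[OF E d, of 0 1 2 3]]])
      by (simp_all add: Qs_def Qf_def Am_def d d[THEN not_sym] sym irr K4_def D4_def P3_def C4_def P4_def K13_def gcompl_def edges_graph_def)
    subgoal apply (rule order_trans[OF _ wS_ge2[OF ic4[OF E d, of 0 2 3 1]]])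
      by (simp_all add: Qs_def Qf_def Am_def d d[THEN not_sym] sym irr K4_def D4_def P3_def C4_def P4_def K13_def gcompl_def edges_graph_def)
    subgoal apply (rule order_trans[OF _ wS_ge5[OF ic4[OF E d, of 0 3 2 1]]])
      by (simp_all add: Qs_def Qf_def Am_def d d[THEN not_sym] sym irr K4_def D4_def P3_def C4_def P4_def K13_def gcompl_def edges_graph_def)
    subgoal apply (rule order_trans[OF _ wS_ge5[OF ic4[OF E d, of 0 2 3 1]]])
      by (simp_all add: Qs_def Qf_def Am_def d d[THEN not_sym] sym irr K4_def D4_def P3_def C4_def P4_def K13_def gcompl_def edges_graph_def)
    subgoal apply (rule order_trans[OF _ wS_ge9[OF ic4[OF E d, of 1 2 3 0]]])
      by (simp_all add: Qs_def Qf_def Am_def d d[THEN not_sym] sym irr K4_def D4_def P3_def C4_def P4_def K13_def gcompl_def edges_graph_def)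
    subgoal apply (rule order_trans[OF _ wS_ge6[OF ic4[OF E d, of 0 1 3 2]]])
      by (simp_all add: Qs_def Qf_def Am_def d d[THEN not_sym] sym irr K4_def D4_def P3_def C4_def P4_def K13_def gcompl_def edges_graph_def)
    subgoal apply (rule order_trans[OF _ wS_ge10[OF ic4[OF E d, of 1 2 0 3]]])
      by (simp_all add: Qs_def Qf_def Am_def d d[THEN not_sym] sym irr K4_def D4_def P3_def C4_def P4_def K13_def gcompl_def edges_graph_def)
    subgoal apply (rule order_trans[OF _ wS_ge10[OF ic4[OF E d, of 1 0 2 3]]])
      by (simp_all add: Qs_def Qf_def Am_def d d[THEN not_sym] sym irr K4_def D4_def P3_def C4_def P4_def K13_def gcompl_def edges_graph_def)
    subgoal apply (rule order_trans[OF _ wS_ge4[OF ic4[OF E d, of 1 0 2 3]]])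
      by (simp_all add: Qs_def Qf_def Am_def d d[THEN not_sym] sym irr K4_def D4_def P3_def C4_def P4_def K13_def gcompl_def edges_graph_def)
    subgoal apply (rule order_trans[OF _ wS_ge2[OF ic4[OF E d, of 0 2 1 3]]])
      by (simp_all add: Qs_def Qf_def Am_def d d[THEN not_sym] sym irr K4_def D4_def P3_def C4_def P4_def K13_def gcompl_def edges_graph_def)
    subgoal apply (rule order_trans[OF _ wS_ge5[OF ic4[OF E d, of 0 3 1 2]]])
      by (simp_all add: Qs_def Qf_def Am_def d d[THEN not_sym] sym irr K4_def D4_def P3_def C4_def P4_def K13_def gcompl_def edges_graph_def)
    subgoal apply (rule order_trans[OF _ wS_ge6[OF ic4[OF E d, of 0 1 2 3]]])
      by (simp_all add: Qs_def Qf_def Am_def d d[THEN not_sym] sym irr K4_def D4_def P3_def C4_def P4_def K13_def gcompl_def edges_graph_def)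
    subgoal apply (rule order_trans[OF _ wS_ge10[OF ic4[OF E d, of 1 2 3 0]]])
      by (simp_all add: Qs_def Qf_def Am_def d d[THEN not_sym] sym irr K4_def D4_def P3_def C4_def P4_def K13_def gcompl_def edges_graph_def)
    subgoal apply (rule order_trans[OF _ wS_ge5[OF ic4[OF E d, of 0 2 1 3]]])
      by (simp_all add: Qs_def Qf_def Am_def d d[THEN not_sym] sym irr K4_def D4_def P3_def C4_def P4_def K13_def gcompl_def edges_graph_def)
    subgoal apply (rule order_trans[OF _ wS_ge9[OF ic4[OF E d, of 1 2 0 3]]])
      by (simp_all add: Qs_def Qf_def Am_def d d[THEN not_sym] sym irr K4_def D4_def P3_def C4_def P4_def K13_def gcompl_def edges_graph_def)
    subgoal apply (rule order_trans[OF _ wS_ge10[OF ic4[OF E d, of 1 0 3 2]]])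
      by (simp_all add: Qs_def Qf_def Am_def d d[THEN not_sym] sym irr K4_def D4_def P3_def C4_def P4_def K13_def gcompl_def edges_graph_def)
    subgoal apply (rule order_trans[OF _ wS_ge4[OF ic4[OF E d, of 1 0 3 2]]])
      by (simp_all add: Qs_def Qf_def Am_def d d[THEN not_sym] sym irr K4_def D4_def P3_def C4_def P4_def K13_def gcompl_def edges_graph_def)
    subgoal apply (rule order_trans[OF _ wS_ge5[OF ic4[OF E d, of 1 3 0 2]]])
      by (simp_all add: Qs_def Qf_def Am_def d d[THEN not_sym] sym irr K4_def D4_def P3_def C4_def P4_def K13_def gcompl_def edges_graph_def)
    subgoal apply (rule order_trans[OF _ wS_ge8[OF ic4[OF E d, of 1 0 2 3]]])
      by (simp_all add: Qs_def Qf_def Am_def d d[THEN not_sym] sym irr K4_def D4_def P3_def C4_def P4_def K13_def gcompl_def edges_graph_def)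
    subgoal apply (rule order_trans[OF _ wS_ge10[OF ic4[OF E d, of 0 1 2 3]]])
      by (simp_all add: Qs_def Qf_def Am_def d d[THEN not_sym] sym irr K4_def D4_def P3_def C4_def P4_def K13_def gcompl_def edges_graph_def)
    subgoal apply (rule order_trans[OF _ wS_ge4[OF ic4[OF E d, of 0 1 2 3]]])
      by (simp_all add: Qs_def Qf_def Am_def d d[THEN not_sym] sym irr K4_def D4_def P3_def C4_def P4_def K13_def gcompl_def edges_graph_def)
    subgoal apply (rule order_trans[OF _ wS_ge10[OF ic4[OF E d, of 0 1 3 2]]])
      by (simp_all add: Qs_def Qf_def Am_def d d[THEN not_sym] sym irr K4_def D4_def P3_def C4_def P4_def K13_def gcompl_def edges_graph_def)
    subgoal apply (rule order_trans[OF _ wS_ge4[OF ic4[OF E d, of 0 1 3 2]]])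
      by (simp_all add: Qs_def Qf_def Am_def d d[THEN not_sym] sym irr K4_def D4_def P3_def C4_def P4_def K13_def gcompl_def edges_graph_def)
    subgoal apply (rule order_trans[OF _ wS_ge7[OF ic4[OF E d, of 0 2 1 3]]])
      by (simp_all add: Qs_def Qf_def Am_def d d[THEN not_sym] sym irr K4_def D4_def P3_def C4_def P4_def K13_def gcompl_def edges_graph_def)
    subgoal apply (rule order_trans[OF _ wS_ge3[OF ic4[OF E d, of 0 1 2 3]]])
      by (simp_all add: Qs_def Qf_def Am_def d d[THEN not_sym] sym irr K4_def D4_def P3_def C4_def P4_def K13_def gcompl_def edges_graph_def)
    subgoal apply (rule order_trans[OF _ wS_ge2[OF ic4[OF E d, of 0 1 2 3]]])
      by (simp_all add: Qs_def Qf_def Am_def d d[THEN not_sym] sym irr K4_def D4_def P3_def C4_def P4_def K13_def gcompl_def edges_graph_def)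
    subgoal apply (rule order_trans[OF _ wS_ge6[OF ic4[OF E d, of 0 2 1 3]]])
      by (simp_all add: Qs_def Qf_def Am_def d d[THEN not_sym] sym irr K4_def D4_def P3_def C4_def P4_def K13_def gcompl_def edges_graph_def)
    subgoal apply (rule order_trans[OF _ wS_ge5[OF ic4[OF E d, of 0 1 3 2]]])
      by (simp_all add: Qs_def Qf_def Am_def d d[THEN not_sym] sym irr K4_def D4_def P3_def C4_def P4_def K13_def gcompl_def edges_graph_def)
    subgoal apply (rule order_trans[OF _ wS_ge10[OF ic4[OF E d, of 1 3 2 0]]])
      by (simp_all add: Qs_def Qf_def Am_def d d[THEN not_sym] sym irr K4_def D4_def P3_def C4_def P4_def K13_def gcompl_def edges_graph_def)
    subgoal apply (rule order_trans[OF _ wS_ge5[OF ic4[OF E d, of 0 1 2 3]]])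
      by (simp_all add: Qs_def Qf_def Am_def d d[THEN not_sym] sym irr K4_def D4_def P3_def C4_def P4_def K13_def gcompl_def edges_graph_def)
    subgoal apply (rule order_trans[OF _ wS_ge10[OF ic4[OF E d, of 1 3 0 2]]])
      by (simp_all add: Qs_def Qf_def Am_def d d[THEN not_sym] sym irr K4_def D4_def P3_def C4_def P4_def K13_def gcompl_def edges_graph_def)
    subgoal apply (rule order_trans[OF _ wS_ge9[OF ic4[OF E d, of 1 0 2 3]]])
      by (simp_all add: Qs_def Qf_def Am_def d d[THEN not_sym] sym irr K4_def D4_def P3_def C4_def P4_def K13_def gcompl_def edges_graph_def)
    subgoal apply (rule order_trans[OF _ wS_ge4[OF ic4[OF E d, of 1 3 0 2]]])
      by (simp_all add: Qs_def Qf_def Am_def d d[THEN not_sym] sym irr K4_def D4_def P3_def C4_def P4_def K13_def gcompl_def edges_graph_def)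
    subgoal apply (rule order_trans[OF _ wS_ge5[OF ic4[OF E d, of 1 0 3 2]]])
      by (simp_all add: Qs_def Qf_def Am_def d d[THEN not_sym] sym irr K4_def D4_def P3_def C4_def P4_def K13_def gcompl_def edges_graph_def)
    subgoal apply (rule order_trans[OF _ wS_ge10[OF ic4[OF E d, of 0 2 1 3]]])
      by (simp_all add: Qs_def Qf_def Am_def d d[THEN not_sym] sym irr K4_def D4_def P3_def C4_def P4_def K13_def gcompl_def edges_graph_def)
    subgoal apply (rule order_trans[OF _ wS_ge8[OF ic4[OF E d, of 1 2 0 3]]])
      by (simp_all add: Qs_def Qf_def Am_def d d[THEN not_sym] sym irr K4_def D4_def P3_def C4_def P4_def K13_def gcompl_def edges_graph_def)
    subgoal apply (rule order_trans[OF _ wS_ge4[OF ic4[OF E d, of 0 2 1 3]]])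
      by (simp_all add: Qs_def Qf_def Am_def d d[THEN not_sym] sym irr K4_def D4_def P3_def C4_def P4_def K13_def gcompl_def edges_graph_def)
    subgoal apply (rule order_trans[OF _ wS_ge10[OF ic4[OF E d, of 0 3 1 2]]])
      by (simp_all add: Qs_def Qf_def Am_def d d[THEN not_sym] sym irr K4_def D4_def P3_def C4_def P4_def K13_def gcompl_def edges_graph_def)
    subgoal apply (rule order_trans[OF _ wS_ge7[OF ic4[OF E d, of 0 1 2 3]]])
      by (simp_all add: Qs_def Qf_def Am_def d d[THEN not_sym] sym irr K4_def D4_def P3_def C4_def P4_def K13_def gcompl_def edges_graph_def)
    subgoal apply (rule order_trans[OF _ wS_ge4[OF ic4[OF E d, of 0 3 1 2]]])
      by (simp_all add: Qs_def Qf_def Am_def d d[THEN not_sym] sym irr K4_def D4_def P3_def C4_def P4_def K13_def gcompl_def edges_graph_def)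
    subgoal apply (rule order_trans[OF _ wS_ge3[OF ic4[OF E d, of 0 2 1 3]]])
      by (simp_all add: Qs_def Qf_def Am_def d d[THEN not_sym] sym irr K4_def D4_def P3_def C4_def P4_def K13_def gcompl_def edges_graph_def)
    subgoal apply (rule order_trans[OF _ wS_ge5[OF ic4[OF E d, of 1 0 2 3]]])
      by (simp_all add: Qs_def Qf_def Am_def d d[THEN not_sym] sym irr K4_def D4_def P3_def C4_def P4_def K13_def gcompl_def edges_graph_def)
    subgoal apply (rule order_trans[OF _ wS_ge10[OF ic4[OF E d, of 0 2 3 1]]])
      by (simp_all add: Qs_def Qf_def Am_def d d[THEN not_sym] sym irr K4_def D4_def P3_def C4_def P4_def K13_def gcompl_def edges_graph_def)
    subgoal apply (rule order_trans[OF _ wS_ge10[OF ic4[OF E d, of 0 3 2 1]]])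
      by (simp_all add: Qs_def Qf_def Am_def d d[THEN not_sym] sym irr K4_def D4_def P3_def C4_def P4_def K13_def gcompl_def edges_graph_def)
    subgoal apply (rule order_trans[OF _ wS_ge7[OF ic4[OF E d, of 0 1 3 2]]])
      by (simp_all add: Qs_def Qf_def Am_def d d[THEN not_sym] sym irr K4_def D4_def P3_def C4_def P4_def K13_def gcompl_def edges_graph_def)
    subgoal apply (rule order_trans[OF _ wS_ge8[OF ic4[OF E d, of 1 2 3 0]]])
      by (simp_all add: Qs_def Qf_def Am_def d d[THEN not_sym] sym irr K4_def D4_def P3_def C4_def P4_def K13_def gcompl_def edges_graph_def)
    subgoal apply (rule order_trans[OF _ wS_ge4[OF ic4[OF E d, of 0 2 3 1]]])
      by (simp_all add: Qs_def Qf_def Am_def d d[THEN not_sym] sym irr K4_def D4_def P3_def C4_def P4_def K13_def gcompl_def edges_graph_def)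
    subgoal apply (rule order_trans[OF _ wS_ge4[OF ic4[OF E d, of 0 3 2 1]]])
      by (simp_all add: Qs_def Qf_def Am_def d d[THEN not_sym] sym irr K4_def D4_def P3_def C4_def P4_def K13_def gcompl_def edges_graph_def)
    subgoal apply (rule order_trans[OF _ wS_ge3[OF ic4[OF E d, of 0 2 3 1]]])
      by (simp_all add: Qs_def Qf_def Am_def d d[THEN not_sym] sym irr K4_def D4_def P3_def C4_def P4_def K13_def gcompl_def edges_graph_def)
    subgoal apply (rule order_trans[OF _ wS_ge9[OF ic4[OF E d, of 0 1 2 3]]])
      by (simp_all add: Qs_def Qf_def Am_def d d[THEN not_sym] sym irr K4_def D4_def P3_def C4_def P4_def K13_def gcompl_def edges_graph_def)
    subgoal apply (rule order_trans[OF _ wS_ge4[OF ic4[OF E d, of 3 1 0 2]]])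
      by (simp_all add: Qs_def Qf_def Am_def d d[THEN not_sym] sym irr K4_def D4_def P3_def C4_def P4_def K13_def gcompl_def edges_graph_def)
    subgoal apply (rule order_trans[OF _ wS_ge4[OF ic4[OF E d, of 3 0 1 2]]])
      by (simp_all add: Qs_def Qf_def Am_def d d[THEN not_sym] sym irr K4_def D4_def P3_def C4_def P4_def K13_def gcompl_def edges_graph_def)
    subgoal apply (rule order_trans[OF _ wS_ge3[OF ic4[OF E d, of 2 0 1 3]]])
      by (simp_all add: Qs_def Qf_def Am_def d d[THEN not_sym] sym irr K4_def D4_def P3_def C4_def P4_def K13_def gcompl_def edges_graph_def)
    subgoal apply (rule order_trans[OF _ wS_ge4[OF ic4[OF E d, of 3 0 2 1]]])
      by (simp_all add: Qs_def Qf_def Am_def d d[THEN not_sym] sym irr K4_def D4_def P3_def C4_def P4_def K13_def gcompl_def edges_graph_def)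
    subgoal apply (rule order_trans[OF _ wS_ge3[OF ic4[OF E d, of 2 0 3 1]]])
      by (simp_all add: Qs_def Qf_def Am_def d d[THEN not_sym] sym irr K4_def D4_def P3_def C4_def P4_def K13_def gcompl_def edges_graph_def)
    subgoal apply (rule order_trans[OF _ wS_ge3[OF ic4[OF E d, of 2 3 0 1]]])
      by (simp_all add: Qs_def Qf_def Am_def d d[THEN not_sym] sym irr K4_def D4_def P3_def C4_def P4_def K13_def gcompl_def edges_graph_def)
    subgoal apply (rule order_trans[OF _ wS_ge1[OF ic4[OF E d, of 0 1 2 3]]])
      by (simp_all add: Qs_def Qf_def Am_def d d[THEN not_sym] sym irr K4_def D4_def P3_def C4_def P4_def K13_def gcompl_def edges_graph_def)
    done
qed

definition DT :: "nat set \<Rightarrow> (nat \<times> nat \<times> nat \<times> nat) set" where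
  "DT V = {(a,b,c,d). a \<in> V \<and> b \<in> V \<and> c \<in> V \<and> d \<in> V \<and> distinct [a,b,c,d]}"

definition g4 :: "nat \<times> nat \<times> nat \<times> nat \<Rightarrow> nat set" where
  "g4 x = (case x of (a,b,c,d) \<Rightarrow> {a,b,c,d})"

lemma len4: "length xs = 4 \<Longrightarrow> \<exists>a b c d. xs = [a,b,c,d]"
  by (auto simp add: numeral_eq_Suc length_Suc_conv)

lemma finite_D4: "finite V \<Longrightarrow> finite (DT V)"
proof -
  assume "finite V"
  then have "finite (V \<times> V \<times> V \<times> V)" by simp
  moreover have "DT V \<subseteq> V \<times> V \<times> V \<times> V" by (auto simp: DT_def)
  ultimately show ?thesis by (rule finite_subset[rotated])
qed

lemma fiber24:
  assumes "S \<subseteq> V" "card S = 4"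
  shows "card {x \<in> DT V. g4 x = S} = 24"
proof -
  have fin: "finite S" using assms(2) by (metis card.infinite zero_neq_numeral)
  have "bij_betw (\<lambda>(a,b,c,d). [a,b,c,d]) {x \<in> DT V. g4 x = S} (permutations_of_set S)"
  proof (rule bij_betwI')
    show "\<And>x y. x \<in> {x \<in> DT V. g4 x = S} \<Longrightarrow> y \<in> {x \<in> DT V. g4 x = S} \<Longrightarrow>
      ((case x of (a,b,c,d) \<Rightarrow> [a,b,c,d]) = (case y of (a,b,c,d) \<Rightarrow> [a,b,c,d])) = (x = y)"
      by auto
    show "\<And>x. x \<in> {x \<in> DT V. g4 x = S} \<Longrightarrow> (case x of (a,b,c,d) \<Rightarrow> [a,b,c,d]) \<in> permutations_of_set S"
      by (auto simp: DT_def g4_def permutations_of_set_def)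
    show "\<exists>x\<in>{x \<in> DT V. g4 x = S}. y = (case x of (a,b,c,d) \<Rightarrow> [a,b,c,d])" if y: "y \<in> permutations_of_set S" for y
    proof -
      have "set y = S" "distinct y" using y by (auto simp: permutations_of_set_def)
      then have "length y = 4" using assms(2) distinct_card by metis
      then obtain a b c d where yy: "y = [a,b,c,d]" using len4 by blast
      have "(a,b,c,d) \<in> {x \<in> DT V. g4 x = S}"
        using \<open>set y = S\<close> \<open>distinct y\<close> assms(1) unfolding yy by (auto simp: DT_def g4_def)
      then show ?thesis using yy by force
    qed
  qed
  then have "card {x \<in> DT V. g4 x = S} = card (permutations_of_set S)" by (rule bij_betw_same_card)
  also have "\<dots> = fact 4" using fin assms(2) by simp
  finally show ?thesis by (simp add: fact_numeral)
qed

definition F4 :: "nat set \<Rightarrow> nat set set" where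
  "F4 V = {S. S \<subseteq> V \<and> card S = 4}"

lemma finite_F4: "finite V \<Longrightarrow> finite (F4 V)"
  unfolding F4_def by (rule finite_subset[of _ "Pow V"]) auto

lemma g4_in: "x \<in> DT V \<Longrightarrow> g4 x \<in> F4 V"
  by (auto simp: DT_def g4_def F4_def)

lemma sum_D4_group:
  fixes h :: "nat set \<Rightarrow> real"
  assumes "finite V"
  shows "(\<Sum>x\<in>DT V. h (g4 x)) = 24 * (\<Sum>S\<in>F4 V. h S)"
proof -
  have "(\<Sum>x\<in>DT V. h (g4 x)) = (\<Sum>S\<in>F4 V. \<Sum>x\<in>{x. x \<in> DT V \<and> g4 x = S}. h (g4 x))"
    by (rule sum.group[symmetric]) (use assms finite_D4 finite_F4 g4_in in auto)
  also have "\<dots> = (\<Sum>S\<in>F4 V. \<Sum>x\<in>{x. x \<in> DT V \<and> g4 x = S}. h S)"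
    by (rule sum.cong) auto
  also have "\<dots> = (\<Sum>S\<in>F4 V. 24 * h S)"
  proof (rule sum.cong)
    fix S assume "S \<in> F4 V"
    then have "card {x \<in> DT V. g4 x = S} = 24" using fiber24 by (auto simp: F4_def)
    then show "(\<Sum>x\<in>{x. x \<in> DT V \<and> g4 x = S}. h S) = 24 * h S" by simp
  qed simp
  finally show ?thesis by (simp add: sum_distrib_left)
qed

lemma card_D4:
  assumes "finite V"
  shows "real (card (DT V)) = 24 * real (card (F4 V))"
  using sum_D4_group[OF assms, of "\<lambda>_. 1::real"] by simp

lemma cnt_ind:
  assumes "finite V"
  shows "(\<Sum>S\<in>F4 V. ind (P S)) = real (card {S. S \<subseteq> V \<and> card S = 4 \<and> P S})"
proof -
  have "(\<Sum>S\<in>F4 V. ind (P S)) = (\<Sum>S\<in>F4 V. if P S then 1 else 0)" by (simp add: ind_def)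
  also have "\<dots> = (\<Sum>S\<in>{S \<in> F4 V. P S}. 1)" by (rule sum.inter_filter[symmetric]) (use assms finite_F4 in auto)
  also have "{S \<in> F4 V. P S} = {S. S \<subseteq> V \<and> card S = 4 \<and> P S}" by (auto simp: F4_def)
  finally show ?thesis by simp
qed

lemma card_F4: "card (F4 {0..<n}) = n choose 4"
  unfolding F4_def using n_subsets[of "{0..<n}" 4] by simp

lemma p4C: "n choose 4 \<noteq> 0 \<Longrightarrow> p4 H n E * real (n choose 4) = real (card {S. S \<subseteq> {0..<n} \<and> card S = 4 \<and> induced_copy H 4 E S})"
  by (simp add: p4_def)

lemma sumF4_le:
  assumes "in_Pi n E"
  shows "(\<Sum>S\<in>F4 {0..<n}. wS E S) \<le> 5/16 * real (card (F4 {0..<n}))"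
proof (cases "n choose 4 = 0")
  case True
  then have "F4 {0..<n} = {}" using card_F4[of n] True by (metis card_0_eq finite_F4 finite_atLeastLessThan)
  then show ?thesis by simp
next
  case False
  let ?C = "real (n choose 4)"
  have C: "?C > 0" using False by simp
  have "(\<Sum>S\<in>F4 {0..<n}. wS E S) = weighted_sum n E * ?C"
    unfolding wS_def weighted_sum_def
    using C by (simp only: sum.distrib sum_distrib_left[symmetric] cnt_ind finite_atLeastLessThan
       distrib_right mult.assoc p4C[OF False])
  also have "\<dots> \<le> 5/16 * ?C" using assms C unfolding in_Pi_def by (intro mult_right_mono) auto
  finally show ?thesis by (simp add: card_F4)
qed

lemma sumDT_Qs_le:
  assumes "simple_graph E" "in_Pi n E"
  shows "(\<Sum>x\<in>DT {0..<n}. case x of (a,b,c,d) \<Rightarrow> Qs E a b c d) \<le> 0"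
proof -
  let ?V = "{0..<n}"
  have "(\<Sum>x\<in>DT ?V. 5/16 + (case x of (a,b,c,d) \<Rightarrow> Qs E a b c d)) \<le> (\<Sum>x\<in>DT ?V. wS E (g4 x))"
  proof (rule sum_mono)
    fix x assume "x \<in> DT ?V"
    then obtain a b c d where x: "x = (a,b,c,d)" "distinct [a,b,c,d]" by (auto simp: DT_def)
    show "5/16 + (case x of (a,b,c,d) \<Rightarrow> Qs E a b c d) \<le> wS E (g4 x)"
      using pointwise[OF assms(1), of a b c d] x by (simp add: g4_def)
  qed
  also have "\<dots> = 24 * (\<Sum>S\<in>F4 ?V. wS E S)" by (rule sum_D4_group) simp
  also have "\<dots> \<le> 24 * (5/16 * real (card (F4 ?V)))" using sumF4_le[OF assms(2)] by simp
  also have "\<dots> = 5/16 * real (card (DT ?V))" using card_D4[of ?V] by simp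
  finally show ?thesis by (simp add: sum.distrib)
qed

lemma sum_Qs:
  "(\<Sum>x\<in>V\<times>V\<times>V\<times>V. case x of (a,b,c,d) \<Rightarrow> Qs E a b c d) = 24 * (\<Sum>x\<in>V\<times>V\<times>V\<times>V. case x of (a,b,c,d) \<Rightarrow> Qf E a b c d)"
proof -
  have r1: "(\<Sum>x\<in>V\<times>V\<times>V\<times>V. case x of (a,b,c,d) \<Rightarrow> Qf E a b d c) = (\<Sum>x\<in>V\<times>V\<times>V\<times>V. case x of (a,b,c,d) \<Rightarrow> Qf E a b c d)"
    by (rule sum.reindex_bij_witness[where j="\<lambda>(a,b,c,d). (a,b,d,c)" and i="\<lambda>(a,b,c,d). (a,b,d,c)"]) auto
  have r2: "(\<Sum>x\<in>V\<times>V\<times>V\<times>V. case x of (a,b,c,d) \<Rightarrow> Qf E a c b d) = (\<Sum>x\<in>V\<times>V\<times>V\<times>V. case x of (a,b,c,d) \<Rightarrow> Qf E a b c d)"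
    by (rule sum.reindex_bij_witness[where j="\<lambda>(a,b,c,d). (a,c,b,d)" and i="\<lambda>(a,b,c,d). (a,c,b,d)"]) auto
  have r3: "(\<Sum>x\<in>V\<times>V\<times>V\<times>V. case x of (a,b,c,d) \<Rightarrow> Qf E a c d b) = (\<Sum>x\<in>V\<times>V\<times>V\<times>V. case x of (a,b,c,d) \<Rightarrow> Qf E a b c d)"
    by (rule sum.reindex_bij_witness[where j="\<lambda>(a,b,c,d). (a,c,d,b)" and i="\<lambda>(a,b,c,d). (a,d,b,c)"]) auto
  have r4: "(\<Sum>x\<in>V\<times>V\<times>V\<times>V. case x of (a,b,c,d) \<Rightarrow> Qf E a d b c) = (\<Sum>x\<in>V\<times>V\<times>V\<times>V. case x of (a,b,c,d) \<Rightarrow> Qf E a b c d)"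
    by (rule sum.reindex_bij_witness[where j="\<lambda>(a,b,c,d). (a,d,b,c)" and i="\<lambda>(a,b,c,d). (a,c,d,b)"]) auto
  have r5: "(\<Sum>x\<in>V\<times>V\<times>V\<times>V. case x of (a,b,c,d) \<Rightarrow> Qf E a d c b) = (\<Sum>x\<in>V\<times>V\<times>V\<times>V. case x of (a,b,c,d) \<Rightarrow> Qf E a b c d)"
    by (rule sum.reindex_bij_witness[where j="\<lambda>(a,b,c,d). (a,d,c,b)" and i="\<lambda>(a,b,c,d). (a,d,c,b)"]) auto
  have r6: "(\<Sum>x\<in>V\<times>V\<times>V\<times>V. case x of (a,b,c,d) \<Rightarrow> Qf E b a c d) = (\<Sum>x\<in>V\<times>V\<times>V\<times>V. case x of (a,b,c,d) \<Rightarrow> Qf E a b c d)"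
    by (rule sum.reindex_bij_witness[where j="\<lambda>(a,b,c,d). (b,a,c,d)" and i="\<lambda>(a,b,c,d). (b,a,c,d)"]) auto
  have r7: "(\<Sum>x\<in>V\<times>V\<times>V\<times>V. case x of (a,b,c,d) \<Rightarrow> Qf E b a d c) = (\<Sum>x\<in>V\<times>V\<times>V\<times>V. case x of (a,b,c,d) \<Rightarrow> Qf E a b c d)"
    by (rule sum.reindex_bij_witness[where j="\<lambda>(a,b,c,d). (b,a,d,c)" and i="\<lambda>(a,b,c,d). (b,a,d,c)"]) auto
  have r8: "(\<Sum>x\<in>V\<times>V\<times>V\<times>V. case x of (a,b,c,d) \<Rightarrow> Qf E b c a d) = (\<Sum>x\<in>V\<times>V\<times>V\<times>V. case x of (a,b,c,d) \<Rightarrow> Qf E a b c d)"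
    by (rule sum.reindex_bij_witness[where j="\<lambda>(a,b,c,d). (b,c,a,d)" and i="\<lambda>(a,b,c,d). (c,a,b,d)"]) auto
  have r9: "(\<Sum>x\<in>V\<times>V\<times>V\<times>V. case x of (a,b,c,d) \<Rightarrow> Qf E b c d a) = (\<Sum>x\<in>V\<times>V\<times>V\<times>V. case x of (a,b,c,d) \<Rightarrow> Qf E a b c d)"
    by (rule sum.reindex_bij_witness[where j="\<lambda>(a,b,c,d). (b,c,d,a)" and i="\<lambda>(a,b,c,d). (d,a,b,c)"]) auto
  have r10: "(\<Sum>x\<in>V\<times>V\<times>V\<times>V. case x of (a,b,c,d) \<Rightarrow> Qf E b d a c) = (\<Sum>x\<in>V\<times>V\<times>V\<times>V. case x of (a,b,c,d) \<Rightarrow> Qf E a b c d)"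
    by (rule sum.reindex_bij_witness[where j="\<lambda>(a,b,c,d). (b,d,a,c)" and i="\<lambda>(a,b,c,d). (c,a,d,b)"]) auto
  have r11: "(\<Sum>x\<in>V\<times>V\<times>V\<times>V. case x of (a,b,c,d) \<Rightarrow> Qf E b d c a) = (\<Sum>x\<in>V\<times>V\<times>V\<times>V. case x of (a,b,c,d) \<Rightarrow> Qf E a b c d)"
    by (rule sum.reindex_bij_witness[where j="\<lambda>(a,b,c,d). (b,d,c,a)" and i="\<lambda>(a,b,c,d). (d,a,c,b)"]) auto
  have r12: "(\<Sum>x\<in>V\<times>V\<times>V\<times>V. case x of (a,b,c,d) \<Rightarrow> Qf E c a b d) = (\<Sum>x\<in>V\<times>V\<times>V\<times>V. case x of (a,b,c,d) \<Rightarrow> Qf E a b c d)"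
    by (rule sum.reindex_bij_witness[where j="\<lambda>(a,b,c,d). (c,a,b,d)" and i="\<lambda>(a,b,c,d). (b,c,a,d)"]) auto
  have r13: "(\<Sum>x\<in>V\<times>V\<times>V\<times>V. case x of (a,b,c,d) \<Rightarrow> Qf E c a d b) = (\<Sum>x\<in>V\<times>V\<times>V\<times>V. case x of (a,b,c,d) \<Rightarrow> Qf E a b c d)"
    by (rule sum.reindex_bij_witness[where j="\<lambda>(a,b,c,d). (c,a,d,b)" and i="\<lambda>(a,b,c,d). (b,d,a,c)"]) auto
  have r14: "(\<Sum>x\<in>V\<times>V\<times>V\<times>V. case x of (a,b,c,d) \<Rightarrow> Qf E c b a d) = (\<Sum>x\<in>V\<times>V\<times>V\<times>V. case x of (a,b,c,d) \<Rightarrow> Qf E a b c d)"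
    by (rule sum.reindex_bij_witness[where j="\<lambda>(a,b,c,d). (c,b,a,d)" and i="\<lambda>(a,b,c,d). (c,b,a,d)"]) auto
  have r15: "(\<Sum>x\<in>V\<times>V\<times>V\<times>V. case x of (a,b,c,d) \<Rightarrow> Qf E c b d a) = (\<Sum>x\<in>V\<times>V\<times>V\<times>V. case x of (a,b,c,d) \<Rightarrow> Qf E a b c d)"
    by (rule sum.reindex_bij_witness[where j="\<lambda>(a,b,c,d). (c,b,d,a)" and i="\<lambda>(a,b,c,d). (d,b,a,c)"]) auto
  have r16: "(\<Sum>x\<in>V\<times>V\<times>V\<times>V. case x of (a,b,c,d) \<Rightarrow> Qf E c d a b) = (\<Sum>x\<in>V\<times>V\<times>V\<times>V. case x of (a,b,c,d) \<Rightarrow> Qf E a b c d)"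
    by (rule sum.reindex_bij_witness[where j="\<lambda>(a,b,c,d). (c,d,a,b)" and i="\<lambda>(a,b,c,d). (c,d,a,b)"]) auto
  have r17: "(\<Sum>x\<in>V\<times>V\<times>V\<times>V. case x of (a,b,c,d) \<Rightarrow> Qf E c d b a) = (\<Sum>x\<in>V\<times>V\<times>V\<times>V. case x of (a,b,c,d) \<Rightarrow> Qf E a b c d)"
    by (rule sum.reindex_bij_witness[where j="\<lambda>(a,b,c,d). (c,d,b,a)" and i="\<lambda>(a,b,c,d). (d,c,a,b)"]) auto
  have r18: "(\<Sum>x\<in>V\<times>V\<times>V\<times>V. case x of (a,b,c,d) \<Rightarrow> Qf E d a b c) = (\<Sum>x\<in>V\<times>V\<times>V\<times>V. case x of (a,b,c,d) \<Rightarrow> Qf E a b c d)"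
    by (rule sum.reindex_bij_witness[where j="\<lambda>(a,b,c,d). (d,a,b,c)" and i="\<lambda>(a,b,c,d). (b,c,d,a)"]) auto
  have r19: "(\<Sum>x\<in>V\<times>V\<times>V\<times>V. case x of (a,b,c,d) \<Rightarrow> Qf E d a c b) = (\<Sum>x\<in>V\<times>V\<times>V\<times>V. case x of (a,b,c,d) \<Rightarrow> Qf E a b c d)"
    by (rule sum.reindex_bij_witness[where j="\<lambda>(a,b,c,d). (d,a,c,b)" and i="\<lambda>(a,b,c,d). (b,d,c,a)"]) auto
  have r20: "(\<Sum>x\<in>V\<times>V\<times>V\<times>V. case x of (a,b,c,d) \<Rightarrow> Qf E d b a c) = (\<Sum>x\<in>V\<times>V\<times>V\<times>V. case x of (a,b,c,d) \<Rightarrow> Qf E a b c d)"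
    by (rule sum.reindex_bij_witness[where j="\<lambda>(a,b,c,d). (d,b,a,c)" and i="\<lambda>(a,b,c,d). (c,b,d,a)"]) auto
  have r21: "(\<Sum>x\<in>V\<times>V\<times>V\<times>V. case x of (a,b,c,d) \<Rightarrow> Qf E d b c a) = (\<Sum>x\<in>V\<times>V\<times>V\<times>V. case x of (a,b,c,d) \<Rightarrow> Qf E a b c d)"
    by (rule sum.reindex_bij_witness[where j="\<lambda>(a,b,c,d). (d,b,c,a)" and i="\<lambda>(a,b,c,d). (d,b,c,a)"]) auto
  have r22: "(\<Sum>x\<in>V\<times>V\<times>V\<times>V. case x of (a,b,c,d) \<Rightarrow> Qf E d c a b) = (\<Sum>x\<in>V\<times>V\<times>V\<times>V. case x of (a,b,c,d) \<Rightarrow> Qf E a b c d)"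
    by (rule sum.reindex_bij_witness[where j="\<lambda>(a,b,c,d). (d,c,a,b)" and i="\<lambda>(a,b,c,d). (c,d,b,a)"]) auto
  have r23: "(\<Sum>x\<in>V\<times>V\<times>V\<times>V. case x of (a,b,c,d) \<Rightarrow> Qf E d c b a) = (\<Sum>x\<in>V\<times>V\<times>V\<times>V. case x of (a,b,c,d) \<Rightarrow> Qf E a b c d)"
    by (rule sum.reindex_bij_witness[where j="\<lambda>(a,b,c,d). (d,c,b,a)" and i="\<lambda>(a,b,c,d). (d,c,b,a)"]) auto
  have split: "(\<Sum>x\<in>V\<times>V\<times>V\<times>V. case x of (a,b,c,d) \<Rightarrow> Qs E a b c d) = (\<Sum>x\<in>V\<times>V\<times>V\<times>V. case x of (a,b,c,d) \<Rightarrow> Qf E a b c d) + (\<Sum>x\<in>V\<times>V\<times>V\<times>V. case x of (a,b,c,d) \<Rightarrow> Qf E a b d c) + (\<Sum>x\<in>V\<times>V\<times>V\<times>V. case x of (a,b,c,d) \<Rightarrow> Qf E a c b d) + (\<Sum>x\<in>V\<times>V\<times>V\<times>V. case x of (a,b,c,d) \<Rightarrow> Qf E a c d b) + (\<Sum>x\<in>V\<times>V\<times>V\<times>V. case x of (a,b,c,d) \<Rightarrow> Qf E a d b c) + (\<Sum>x\<in>V\<times>V\<times>V\<times>V. case x of (a,b,c,d) \<Rightarrow> Qf E a d c b) + (\<Sum>x\<in>V\<times>V\<times>V\<times>V. case x of (a,b,c,d) \<Rightarrow> Qf E b a c d) + (\<Sum>x\<in>V\<times>V\<times>V\<times>V.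 case x of (a,b,c,d) \<Rightarrow> Qf E b a d c) + (\<Sum>x\<in>V\<times>V\<times>V\<times>V. case x of (a,b,c,d) \<Rightarrow> Qf E b c a d) + (\<Sum>x\<in>V\<times>V\<times>V\<times>V. case x of (a,b,c,d) \<Rightarrow> Qf E b c d a) + (\<Sum>x\<in>V\<times>V\<times>V\<times>V. case x of (a,b,c,d) \<Rightarrow> Qf E b d a c) + (\<Sum>x\<in>V\<times>V\<times>V\<times>V. case x of (a,b,c,d) \<Rightarrow> Qf E b d c a) + (\<Sum>x\<in>V\<times>V\<times>V\<times>V. case x of (a,b,c,d) \<Rightarrow> Qf E c a b d) + (\<Sum>x\<in>V\<times>V\<times>V\<times>V. case x of (a,b,c,d) \<Rightarrow> Qf E c a d b) + (\<Sum>x\<in>V\<times>V\<times>V\<times>V. case x of (a,b,c,d) \<Rightarrow> Qf E c b a d) + (\<Sum>x\<in>V\<times>V\<times>V\<times>V. case x of (a,b,c,d) \<Rightarrow> Qf E c b d a) + (\<Sum>x\<in>V\<times>V\<times>V\<times>V. case x of (a,b,c,d) \<Rightarrow> Qf E c d a b) + (\<Sum>x\<in>V\<times>V\<times>V\<times>V. case x of (a,b,c,d) \<Rightarrow> Qf E c d b a) + (\<Sum>x\<in>V\<times>V\<times>V\<times>V. case x of (a,b,c,d) \<Rightarrow> Qf E d a b c) + (\<Sum>x\<in>V\<times>V\<times>V\<times>V. case x of (a,b,c,d) \<Rightarrow> Qf E d a c b) + (\<Sum>x\<in>V\<times>V\<times>V\<times>V. case x of (a,b,c,d) \<Rightarrow>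 Qf E d b a c) + (\<Sum>x\<in>V\<times>V\<times>V\<times>V. case x of (a,b,c,d) \<Rightarrow> Qf E d b c a) + (\<Sum>x\<in>V\<times>V\<times>V\<times>V. case x of (a,b,c,d) \<Rightarrow> Qf E d c a b) + (\<Sum>x\<in>V\<times>V\<times>V\<times>V. case x of (a,b,c,d) \<Rightarrow> Qf E d c b a)"
    by (simp only: Qs_def split_def sum.distrib)
  show ?thesis unfolding split r1 r2 r3 r4 r5 r6 r7 r8 r9 r10 r11 r12 r13 r14 r15 r16 r17 r18 r19 r20 r21 r22 r23 by simp
qed

lemma Am_abs: "\<bar>Am E u v\<bar> \<le> 1" by (simp add: Am_def)

lemma Am_sym: "simple_graph E \<Longrightarrow> Am E u v = Am E v u"
  by (auto simp: Am_def simple_graph_def)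

lemma abs_prod_le1: "\<bar>x::real\<bar> \<le> 1 \<Longrightarrow> \<bar>y\<bar> \<le> 1 \<Longrightarrow> \<bar>x * y\<bar> \<le> 1"
  by (simp add: abs_mult mult_le_one)

lemma Qf_abs: "\<bar>Qf E a b c d\<bar> \<le> 1/24"
proof -
  have p1: "\<bar>Am E a b * Am E b c\<bar> \<le> 1" by (intro abs_prod_le1 Am_abs)
  have p2: "\<bar>Am E a b * Am E c d\<bar> \<le> 1" by (intro abs_prod_le1 Am_abs)
  have p3: "\<bar>Am E a b * Am E b c * Am E c d\<bar> \<le> 1" by (intro abs_prod_le1 Am_abs)
  have p4: "\<bar>Am E a b * Am E b c * Am E c d * Am E d a\<bar> \<le> 1" by (intro abs_prod_le1 Am_abs)
  show ?thesis unfolding Qf_def using p1 p2 p3 p4 unfolding abs_le_iff by linarith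
qed

lemma Qs_abs: "\<bar>Qs E a b c d\<bar> \<le> 1"
  unfolding Qs_def using Qf_abs[of E a b c d] Qf_abs[of E a b d c] Qf_abs[of E a c b d] Qf_abs[of E a c d b] Qf_abs[of E a d b c] Qf_abs[of E a d c b] Qf_abs[of E b a c d] Qf_abs[of E b a d c] Qf_abs[of E b c a d] Qf_abs[of E b c d a] Qf_abs[of E b d a c] Qf_abs[of E b d c a] Qf_abs[of E c a b d] Qf_abs[of E c a d b] Qf_abs[of E c b a d] Qf_abs[of E c b d a] Qf_abs[of E c d a b] Qf_abs[of E c d b a] Qf_abs[of E d a b c] Qf_abs[of E d a c b] Qf_abs[of E d b a c] Qf_abs[of E d b c a] Qf_abs[of E d c a b] Qf_abs[of E d c b a] unfolding abs_le_iff by linarith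

lemma card_nondist:
  assumes "finite V"
  shows "card (V\<times>V\<times>V\<times>V - DT V) \<le> 6 * card V ^ 3"
proof -
  let ?W = "V\<times>V\<times>V"
  let ?N = "(\<lambda>(a,c,d). (a,a,c,d)) ` ?W \<union> (\<lambda>(a,b,d). (a,b,a,d)) ` ?W \<union> (\<lambda>(a,b,c). (a,b,c,a)) ` ?W
     \<union> (\<lambda>(a,b,d). (a,b,b,d)) ` ?W \<union> (\<lambda>(a,b,c). (a,b,c,b)) ` ?W \<union> (\<lambda>(a,b,c). (a,b,c,c)) ` ?W"
  have sub: "V\<times>V\<times>V\<times>V - DT V \<subseteq> ?N"
  proof
    fix x assume x: "x \<in> V\<times>V\<times>V\<times>V - DT V"
    then obtain a b c d where xx: "x = (a,b,c,d)" and v: "a \<in> V" "b \<in> V" "c \<in> V" "d \<in> V" by auto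
    have "\<not> distinct [a,b,c,d]" using x v unfolding xx DT_def by auto
    then have "a = b \<or> a = c \<or> a = d \<or> b = c \<or> b = d \<or> c = d" by auto
    then show "x \<in> ?N"
    proof (elim disjE)
      assume "a = b" then show ?thesis unfolding xx using v by (intro UnI1) (rule rev_image_eqI[of "(a,c,d)"], auto)
    next
      assume "a = c" then show ?thesis unfolding xx using v
        by (intro UnI1 UnI2) (rule rev_image_eqI[of "(a,b,d)"], auto)
    next
      assume "a = d" then show ?thesis unfolding xx using v
        by (intro UnI1 UnI2) (rule rev_image_eqI[of "(a,b,c)"], auto)
    next
      assume "b = c" then show ?thesis unfolding xx using v
        by (intro UnI1 UnI2) (rule rev_image_eqI[of "(a,b,d)"], auto)
    next
      assume "b = d" then show ?thesis unfolding xx using v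
        by (intro UnI1 UnI2) (rule rev_image_eqI[of "(a,b,c)"], auto)
    next
      assume "c = d" then show ?thesis unfolding xx using v
        by (intro UnI2) (rule rev_image_eqI[of "(a,b,c)"], auto)
    qed
  qed
  have cW: "card ?W = card V ^ 3" by (simp add: card_cartesian_product power3_eq_cube)
  have "card ?N \<le> 6 * card ?W"
  proof -
    have fW: "finite ?W" using assms by simp
    have "card ?N \<le> card ((\<lambda>(a,c,d). (a,a,c,d)) ` ?W) + card ((\<lambda>(a,b,d). (a,b,a,d)) ` ?W) + card ((\<lambda>(a,b,c). (a,b,c,a)) ` ?W)
     + card ((\<lambda>(a,b,d). (a,b,b,d)) ` ?W) + card ((\<lambda>(a,b,c). (a,b,c,b)) ` ?W) + card ((\<lambda>(a,b,c). (a,b,c,c)) ` ?W)"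
      by (rule order_trans[OF card_Un_le] add_mono order_refl)+
    also have "\<dots> \<le> 6 * card ?W" using card_image_le[OF fW, of "\<lambda>(a,c,d). (a,a,c,d)"] card_image_le[OF fW, of "\<lambda>(a,b,d). (a,b,a,d)"] card_image_le[OF fW, of "\<lambda>(a,b,c). (a,b,c,a)"] card_image_le[OF fW, of "\<lambda>(a,b,d). (a,b,b,d)"] card_image_le[OF fW, of "\<lambda>(a,b,c). (a,b,c,b)"] card_image_le[OF fW, of "\<lambda>(a,b,c). (a,b,c,c)"] by linarith
    finally show ?thesis .
  qed
  moreover have "card (V\<times>V\<times>V\<times>V - DT V) \<le> card ?N"
    by (rule card_mono) (use assms sub in auto)
  ultimately show ?thesis using cW by simp
qed

lemma nest4: "(\<Sum>x\<in>V\<times>V\<times>V\<times>V. case x of (a,b,c,d) \<Rightarrow> F a b c d) = (\<Sum>a\<in>V. \<Sum>b\<in>V. \<Sum>c\<in>V. \<Sum>d\<in>V. F a b c d)"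
  by (simp add: sum.cartesian_product)

lemma sumV4_Qs_le:
  assumes "simple_graph E" "in_Pi n E"
  shows "(\<Sum>x\<in>{0..<n}\<times>{0..<n}\<times>{0..<n}\<times>{0..<n}. case x of (a,b,c,d) \<Rightarrow> Qs E a b c d) \<le> 6 * real n ^ 3"
proof -
  let ?V = "{0..<n}"
  let ?f = "\<lambda>x. case x of (a,b,c,d) \<Rightarrow> Qs E a b c d"
  have sub: "DT ?V \<subseteq> ?V\<times>?V\<times>?V\<times>?V" by (auto simp: DT_def)
  have "sum ?f (?V\<times>?V\<times>?V\<times>?V) = sum ?f (?V\<times>?V\<times>?V\<times>?V - DT ?V) + sum ?f (DT ?V)"
    by (rule sum.subset_diff[OF sub]) simp
  also have "sum ?f (?V\<times>?V\<times>?V\<times>?V - DT ?V) \<le> real (card (?V\<times>?V\<times>?V\<times>?V - DT ?V)) * 1"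
  proof (rule sum_bounded_above)
    fix x show "?f x \<le> 1" using Qs_abs[of E] by (cases x) (auto simp: abs_le_iff)
  qed
  also have "real (card (?V\<times>?V\<times>?V\<times>?V - DT ?V)) * 1 \<le> 6 * real n ^ 3"
    using card_nondist[of ?V] by simp (metis of_nat_le_iff of_nat_mult of_nat_numeral of_nat_power)
  finally show ?thesis using sumDT_Qs_le[OF assms] by simp
qed

definition T4 :: "(nat \<Rightarrow> nat \<Rightarrow> bool) \<Rightarrow> nat set \<Rightarrow> real" where
  "T4 E V = (\<Sum>a\<in>V. \<Sum>b\<in>V. \<Sum>c\<in>V. \<Sum>d\<in>V. Am E a b * Am E b c * Am E c d * Am E d a)"

lemma pt_nonneg: "\<bar>t::real\<bar> \<le> 1 \<Longrightarrow> 0 \<le> (x^2 + y^2)/2 + x * t * y"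
proof -
  assume t: "\<bar>t\<bar> \<le> 1"
  have "\<bar>x * t * y\<bar> \<le> \<bar>x\<bar> * \<bar>y\<bar>"
  proof -
    have "\<bar>t\<bar> * (\<bar>x\<bar> * \<bar>y\<bar>) \<le> 1 * (\<bar>x\<bar> * \<bar>y\<bar>)" by (rule mult_right_mono) (use t in auto)
    then show ?thesis by (simp add: abs_mult ac_simps)
  qed
  moreover have "\<bar>x\<bar> * \<bar>y\<bar> \<le> (x^2 + y^2)/2"
    using sum_squares_bound[of "\<bar>x\<bar>" "\<bar>y\<bar>"] by simp
  ultimately have "-(x * t * y) \<le> (x^2 + y^2)/2" by (simp add: abs_le_iff)
  then show ?thesis by linarith
qed

lemma Qf_lower:
  assumes E: "simple_graph E" and fin: "finite V"
  shows "T4 E V / 384 \<le> (\<Sum>x\<in>V\<times>V\<times>V\<times>V. case x of (a,b,c,d) \<Rightarrow> Qf E a b c d)"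
proof -
  let ?A = "Am E"
  define S1 where "S1 = (\<Sum>a\<in>V. \<Sum>b\<in>V. \<Sum>c\<in>V. \<Sum>d\<in>V. ?A a b * ?A b c)"
  define S2 where "S2 = (\<Sum>a\<in>V. \<Sum>b\<in>V. \<Sum>c\<in>V. \<Sum>d\<in>V. ?A a b * ?A c d)"
  define S3 where "S3 = (\<Sum>a\<in>V. \<Sum>b\<in>V. \<Sum>c\<in>V. \<Sum>d\<in>V. ?A a b * ?A b c * ?A c d)"
  have split: "(\<Sum>x\<in>V\<times>V\<times>V\<times>V. case x of (a,b,c,d) \<Rightarrow> Qf E a b c d) = S1/96 + S2/192 + S3/96 + T4 E V/384"
    unfolding nest4 S1_def S2_def S3_def T4_def Qf_def
    by (simp add: sum.distrib sum_distrib_left sum_divide_distrib)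
  define K where "K = (\<Sum>a\<in>V. \<Sum>b\<in>V. ?A a b)"
  have "S2 = (\<Sum>a\<in>V. \<Sum>b\<in>V. ?A a b * K)" unfolding S2_def K_def by (simp add: sum_distrib_left)
  also have "\<dots> = (\<Sum>a\<in>V. \<Sum>b\<in>V. ?A a b) * K" by (simp add: sum_distrib_right)
  finally have "S2 = K * K" unfolding K_def by simp
  then have S2: "S2 \<ge> 0" by simp
  define dg where "dg b = (\<Sum>c\<in>V. ?A b c)" for b
  have sym: "\<And>u v. ?A u v = ?A v u" using Am_sym[OF E] by blast
  have S1: "S1 = (\<Sum>b\<in>V. \<Sum>c\<in>V. dg b ^ 2)"
  proof -
    have "S1 = (\<Sum>a\<in>V. \<Sum>b\<in>V. \<Sum>c\<in>V. real (card V) * (?A a b * ?A b c))" unfolding S1_def by simp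
    also have "\<dots> = real (card V) * (\<Sum>b\<in>V. \<Sum>a\<in>V. \<Sum>c\<in>V. ?A b a * ?A b c)"
      by (subst sum.swap) (simp add: sum_distrib_left sym)
    also have "\<dots> = real (card V) * (\<Sum>b\<in>V. dg b ^ 2)"
      by (simp add: dg_def power2_eq_square sum_product)
    finally show ?thesis by (simp add: sum_distrib_left)
  qed
  have S3: "S3 = (\<Sum>b\<in>V. \<Sum>c\<in>V. dg b * ?A b c * dg c)"
  proof -
    have "S3 = (\<Sum>b\<in>V. \<Sum>a\<in>V. \<Sum>c\<in>V. \<Sum>d\<in>V. ?A b a * ?A b c * ?A c d)"
      unfolding S3_def by (subst sum.swap) (simp add: sym)
    also have "\<dots> = (\<Sum>b\<in>V. \<Sum>c\<in>V. \<Sum>a\<in>V. \<Sum>d\<in>V. ?A b a * ?A b c * ?A c d)"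
      by (rule sum.cong[OF refl], rule sum.swap)
    also have "\<dots> = (\<Sum>b\<in>V. \<Sum>c\<in>V. dg b * ?A b c * dg c)"
    proof (intro sum.cong refl)
      fix b c
      have "(\<Sum>a\<in>V. \<Sum>d\<in>V. ?A b a * ?A b c * ?A c d) = (\<Sum>a\<in>V. ?A b a * ?A b c * dg c)"
        by (simp add: dg_def sum_distrib_left)
      also have "\<dots> = dg b * ?A b c * dg c" by (simp add: dg_def[of b] sum_distrib_right)
      finally show "(\<Sum>a\<in>V. \<Sum>d\<in>V. ?A b a * ?A b c * ?A c d) = dg b * ?A b c * dg c" .
    qed
    finally show ?thesis .
  qed
  have S1': "S1 = (\<Sum>b\<in>V. \<Sum>c\<in>V. (dg b ^ 2 + dg c ^ 2) / 2)"
  proof -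
    have "(\<Sum>b\<in>V. \<Sum>c\<in>V. dg c ^ 2) = (\<Sum>b\<in>V. \<Sum>c\<in>V. dg b ^ 2)" by (rule sum.swap)
    then show ?thesis unfolding S1 by (simp add: sum.distrib add_divide_distrib sum_divide_distrib[symmetric])
  qed
  have "0 \<le> (\<Sum>b\<in>V. \<Sum>c\<in>V. (dg b ^ 2 + dg c ^ 2) / 2 + dg b * ?A b c * dg c)"
    by (intro sum_nonneg pt_nonneg Am_abs)
  then have "0 \<le> S1 + S3" unfolding S1' S3 by (simp add: sum.distrib)
  then show ?thesis unfolding split using S2 by linarith
qed

lemma cs_sum:
  fixes f :: "'a \<Rightarrow> real"
  assumes "finite I"
  shows "(\<Sum>i\<in>I. f i)^2 \<le> real (card I) * (\<Sum>i\<in>I. (f i)^2)"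
proof -
  have "0 \<le> (\<Sum>i\<in>I. \<Sum>j\<in>I. (f i - f j)^2)" by (intro sum_nonneg) simp
  also have "(\<Sum>i\<in>I. \<Sum>j\<in>I. (f i - f j)^2) = (\<Sum>i\<in>I. \<Sum>j\<in>I. (f i)^2) + (\<Sum>i\<in>I. \<Sum>j\<in>I. (f j)^2) - 2 * (\<Sum>i\<in>I. \<Sum>j\<in>I. f i * f j)"
    by (simp add: power2_diff sum.distrib sum_subtractf sum_distrib_left mult.assoc)
  also have "(\<Sum>i\<in>I. \<Sum>j\<in>I. f i * f j) = (\<Sum>i\<in>I. f i)^2" by (simp add: power2_eq_square sum_product)
  also have "(\<Sum>i\<in>I. \<Sum>j\<in>I. (f i)^2) = real (card I) * (\<Sum>i\<in>I. (f i)^2)" by (simp add: sum_distrib_left mult.commute)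
  also have "(\<Sum>i\<in>I. \<Sum>j\<in>I. (f j)^2) = real (card I) * (\<Sum>i\<in>I. (f i)^2)" by simp
  finally show ?thesis by simp
qed

lemma swap4:
  fixes F :: "nat \<Rightarrow> nat \<Rightarrow> nat \<Rightarrow> nat \<Rightarrow> real"
  shows "(\<Sum>w\<in>V. \<Sum>w'\<in>V. \<Sum>u\<in>V. \<Sum>v\<in>V. F w w' u v) = (\<Sum>u\<in>V. \<Sum>w\<in>V. \<Sum>v\<in>V. \<Sum>w'\<in>V. F w w' u v)"
proof -
  have "(\<Sum>x\<in>V\<times>V\<times>V\<times>V. case x of (w,w',u,v) \<Rightarrow> F w w' u v) = (\<Sum>x\<in>V\<times>V\<times>V\<times>V. case x of (u,w,v,w') \<Rightarrow> F w w' u v)"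
    by (rule sum.reindex_bij_witness[where j="\<lambda>(w,w',u,v). (u,w,v,w')" and i="\<lambda>(u,w,v,w'). (w,w',u,v)"]) auto
  then show ?thesis by (simp only: nest4)
qed

lemma disc:
  assumes E: "simple_graph E" and fin: "finite V" and U: "U \<subseteq> V" and W: "W \<subseteq> V"
  shows "(\<Sum>u\<in>U. \<Sum>w\<in>W. Am E u w)^4 \<le> real (card U)^2 * real (card W)^2 * T4 E V"
proof -
  let ?A = "Am E"
  have sym: "\<And>u v. ?A u v = ?A v u" using Am_sym[OF E] by blast
  have finU: "finite U" and finW: "finite W" using U W fin finite_subset by auto
  define r where "r u = (\<Sum>w\<in>W. ?A u w)" for u
  define M where "M w w' = (\<Sum>u\<in>V. ?A u w * ?A u w')" for w w'
  define X where "X = (\<Sum>u\<in>U. \<Sum>w\<in>W. ?A u w)"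
  define R where "R = (\<Sum>w\<in>W. \<Sum>w'\<in>W. M w w')"
  have "X^2 \<le> real (card U) * (\<Sum>u\<in>U. (r u)^2)" unfolding X_def r_def by (rule cs_sum[OF finU])
  also have "(\<Sum>u\<in>U. (r u)^2) \<le> (\<Sum>u\<in>V. (r u)^2)" by (rule sum_mono2[OF fin U]) auto
  also have "(\<Sum>u\<in>V. (r u)^2) = R"
  proof -
    have "(\<Sum>u\<in>V. (r u)^2) = (\<Sum>u\<in>V. \<Sum>w\<in>W. \<Sum>w'\<in>W. ?A u w * ?A u w')"
      by (simp add: r_def power2_eq_square sum_product)
    also have "\<dots> = (\<Sum>w\<in>W. \<Sum>u\<in>V. \<Sum>w'\<in>W. ?A u w * ?A u w')" by (rule sum.swap)
    also have "\<dots> = (\<Sum>w\<in>W. \<Sum>w'\<in>W. \<Sum>u\<in>V. ?A u w * ?A u w')" by (rule sum.cong[OF refl], rule sum.swap)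
    finally show ?thesis by (simp add: R_def M_def)
  qed
  finally have X2: "X^2 \<le> real (card U) * R" by (simp add: mult_left_mono)
  have R0: "0 \<le> R"
  proof -
    have "0 \<le> (\<Sum>u\<in>V. (r u)^2)" by (simp add: sum_nonneg)
    also have "(\<Sum>u\<in>V. (r u)^2) = (\<Sum>u\<in>V. \<Sum>w\<in>W. \<Sum>w'\<in>W. ?A u w * ?A u w')"
      by (simp add: r_def power2_eq_square sum_product)
    also have "\<dots> = (\<Sum>w\<in>W. \<Sum>u\<in>V. \<Sum>w'\<in>W. ?A u w * ?A u w')" by (rule sum.swap)
    also have "\<dots> = R" unfolding R_def M_def by (rule sum.cong[OF refl], rule sum.swap)
    finally show ?thesis .
  qed
  have "R^2 \<le> real (card W) * (\<Sum>w\<in>W. (\<Sum>w'\<in>W. M w w')^2)" unfolding R_def by (rule cs_sum[OF finW])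
  also have "\<dots> \<le> real (card W) * (\<Sum>w\<in>W. real (card W) * (\<Sum>w'\<in>W. (M w w')^2))"
    by (intro mult_left_mono sum_mono cs_sum[OF finW]) auto
  also have "\<dots> = real (card W)^2 * (\<Sum>w\<in>W. \<Sum>w'\<in>W. (M w w')^2)"
    by (simp add: sum_distrib_left power2_eq_square mult.assoc)
  also have "(\<Sum>w\<in>W. \<Sum>w'\<in>W. (M w w')^2) \<le> (\<Sum>w\<in>V. \<Sum>w'\<in>V. (M w w')^2)"
  proof -
    have "(\<Sum>w\<in>W. \<Sum>w'\<in>W. (M w w')^2) \<le> (\<Sum>w\<in>W. \<Sum>w'\<in>V. (M w w')^2)"
      by (intro sum_mono sum_mono2[OF fin W]) auto
    also have "\<dots> \<le> (\<Sum>w\<in>V. \<Sum>w'\<in>V. (M w w')^2)"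
      by (rule sum_mono2[OF fin W]) (auto intro: sum_nonneg)
    finally show ?thesis .
  qed
  also have "(\<Sum>w\<in>V. \<Sum>w'\<in>V. (M w w')^2) = T4 E V"
  proof -
    have "(\<Sum>w\<in>V. \<Sum>w'\<in>V. (M w w')^2) = (\<Sum>w\<in>V. \<Sum>w'\<in>V. \<Sum>u\<in>V. \<Sum>v\<in>V. ?A u w * ?A u w' * (?A v w * ?A v w'))"
      by (simp add: M_def power2_eq_square sum_product)
    also have "\<dots> = (\<Sum>u\<in>V. \<Sum>w\<in>V. \<Sum>v\<in>V. \<Sum>w'\<in>V. ?A u w * ?A u w' * (?A v w * ?A v w'))"
      by (rule swap4)
    also have "\<dots> = T4 E V"
    proof -
      have key: "?A u w * ?A u w' * (?A v w * ?A v w') = ?A u w * ?A w v * ?A v w' * ?A w' u" for u w v w'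
      proof -
        have s: "?A w v = ?A v w" "?A w' u = ?A u w'" by (rule sym)+
        show ?thesis unfolding s by (simp add: mult_ac)
      qed
      show ?thesis unfolding T4_def by (intro sum.cong refl) (rule key)
    qed
    finally show ?thesis .
  qed
  finally have R2: "R^2 \<le> real (card W)^2 * T4 E V" by (simp add: mult_left_mono)
  have "X^4 = (X^2)^2" by simp
  also have "\<dots> \<le> (real (card U) * R)^2"
    by (rule power_mono[OF X2]) simp
  also have "\<dots> = real (card U)^2 * R^2" by (simp add: power_mult_distrib)
  also have "\<dots> \<le> real (card U)^2 * (real (card W)^2 * T4 E V)" by (rule mult_left_mono[OF R2]) simp
  finally show ?thesis unfolding X_def by (simp add: mult.assoc)
qed

lemma e_between_X:
  assumes "U \<inter> W = {}" "finite U" "finite W"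
  shows "(\<Sum>u\<in>U. \<Sum>w\<in>W. Am E u w) = 2 * real (e_between E U W) - real (card U) * real (card W)"
proof -
  have "(\<Sum>u\<in>U. \<Sum>w\<in>W. Am E u w) = (\<Sum>p\<in>U\<times>W. 2 * (if E (fst p) (snd p) then 1 else 0) - 1)"
    unfolding sum.cartesian_product
    by (rule sum.cong) (use assms(1) in \<open>auto simp: Am_def\<close>)
  also have "\<dots> = 2 * (\<Sum>p\<in>U\<times>W. (if E (fst p) (snd p) then 1 else 0)) - real (card (U \<times> W))"
    by (simp add: sum_subtractf sum_distrib_left)
  also have "(\<Sum>p\<in>U\<times>W. (if E (fst p) (snd p) then 1 else 0)) = (\<Sum>p\<in>{p \<in> U\<times>W. E (fst p) (snd p)}. 1::real)"
    by (rule sum.inter_filter[symmetric]) (use assms in auto)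
  also have "{p \<in> U\<times>W. E (fst p) (snd p)} = {(u, w). u \<in> U \<and> w \<in> W \<and> E u w}" by auto
  finally show ?thesis by (simp add: e_between_def card_cartesian_product)
qed

lemma T4_bound:
  assumes "simple_graph E" "in_Pi n E"
  shows "T4 E {0..<n} \<le> 96 * real n ^ 3"
  using Qf_lower[OF assms(1) finite_atLeastLessThan[of 0 n]] sum_Qs[where V="{0..<n}" and E=E] sumV4_Qs_le[OF assms] by linarith

lemma delta_facts:
  assumes n: "n \<ge> (1::nat)"
  shows "0 < 2 * real n powr (-1/24)" "6 \<le> (2 * real n powr (-1/24))^8 * real n"
proof -
  define t where "t = real n powr (1/24)"
  have n0: "real n > 0" using n by simp
  have t1: "t \<ge> 1" unfolding t_def using n by (intro ge_one_powr_ge_zero) auto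
  then have t0: "t > 0" by simp
  have "t powr (real 24) = t^24" using t0 by (rule powr_realpow)
  moreover have "t powr (real 24) = real n powr (1/24 * real 24)" unfolding t_def by (rule powr_powr)
  moreover have "real n powr (1/24 * real 24) = real n" using n0 by simp
  ultimately have t24: "t^24 = real n" by simp
  have "real n powr (-1/24) = real n powr (-(1/24))" by simp
  also have "\<dots> = inverse t" unfolding t_def by (rule powr_minus)
  finally have d0: "real n powr (-1/24) = inverse t" .
  have d: "2 * real n powr (-1/24) = 2 / t" unfolding d0 by (rule divide_inverse[symmetric])
  show "0 < 2 * real n powr (-1/24)" using n0 by simp
  have e1: "(2 / t)^8 * t^8 = 256"
  proof -
    have "(2 / t)^8 * t^8 = (2 / t * t)^8" by (simp only: power_mult_distrib)
    also have "2 / t * t = 2" using t0 by simp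
    finally show ?thesis by simp
  qed
  have e2: "t^24 = t^8 * t^16" by (simp only: power_add[symmetric]) simp
  have "(2 / t)^8 * real n = ((2 / t)^8 * t^8) * t^16" unfolding t24[symmetric] e2 by (simp only: mult.assoc)
  also have "\<dots> = 256 * t^16" using e1 by simp
  finally have "(2 / t)^8 * real n = 256 * t^16" .
  moreover have "1 \<le> t^16" using t1 by simp
  ultimately show "6 \<le> (2 * real n powr (-1/24))^8 * real n" unfolding d by linarith
qed

theorem lemma2p4:
  shows "\<exists>C::real. \<forall>n::nat. \<forall>E. n \<ge> 1 \<and> simple_graph E \<and> in_Pi n E \<longrightarrow>
            quasirandom (C * real n powr (-1/24)) n E"
proof (intro exI allI impI)
  fix n :: nat and E
  assume H: "n \<ge> 1 \<and> simple_graph E \<and> in_Pi n E"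
  then have n: "n \<ge> 1" and E: "simple_graph E" and P: "in_Pi n E" by auto
  define \<delta> where "\<delta> = 2 * real n powr (-1/24)"
  have d0: "0 < \<delta>" and d8: "6 \<le> \<delta>^8 * real n" using delta_facts[OF n] unfolding \<delta>_def by auto
  have T4: "T4 E {0..<n} \<le> 96 * real n ^ 3" by (rule T4_bound[OF E P])
  show "quasirandom (2 * real n powr (-1/24)) n E"
    unfolding quasirandom_def \<delta>_def[symmetric]
  proof (intro allI impI)
    fix U W
    assume A: "U \<subseteq> {0..<n} \<and> W \<subseteq> {0..<n} \<and> U \<inter> W = {} \<and> \<delta> * real n \<le> real (card U) \<and> \<delta> * real n \<le> real (card W)"
    then have U: "U \<subseteq> {0..<n}" and W: "W \<subseteq> {0..<n}" and UW: "U \<inter> W = {}"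
      and cu: "\<delta> * real n \<le> real (card U)" and cw: "\<delta> * real n \<le> real (card W)" by auto
    have finU: "finite U" and finW: "finite W" using U W finite_subset by auto
    define u where "u = real (card U)"
    define w where "w = real (card W)"
    define X where "X = (\<Sum>u\<in>U. \<Sum>w\<in>W. Am E u w)"
    have Xe: "X = 2 * real (e_between E U W) - u * w" unfolding X_def u_def w_def by (rule e_between_X[OF UW finU finW])
    have dn0: "0 \<le> \<delta> * real n" using d0 by simp
    have u0: "0 \<le> u" and w0: "0 \<le> w" unfolding u_def w_def by auto
    have X4: "X^4 \<le> u^2 * w^2 * (96 * real n ^ 3)"
    proof -
      have "X^4 \<le> u^2 * w^2 * T4 E {0..<n}" unfolding X_def u_def w_def by (rule disc[OF E _ U W]) simp
      also have "\<dots> \<le> u^2 * w^2 * (96 * real n ^ 3)" by (rule mult_left_mono[OF T4]) simp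
      finally show ?thesis .
    qed
    define PP where "PP = u^2 * w^2"
    have PP0: "0 \<le> PP" unfolding PP_def by simp
    have QP: "\<delta>^4 * real n ^ 4 \<le> PP"
    proof -
      have "(\<delta> * real n)^2 \<le> u^2" using cu dn0 unfolding u_def by (intro power_mono) auto
      moreover have "(\<delta> * real n)^2 \<le> w^2" using cw dn0 unfolding w_def by (intro power_mono) auto
      ultimately have "(\<delta> * real n)^2 * (\<delta> * real n)^2 \<le> u^2 * w^2" by (intro mult_mono) auto
      then show ?thesis unfolding PP_def by (simp add: power_mult_distrib power2_eq_square power4_eq_xxxx mult_ac)
    qed
    have "X^4 \<le> 96 * real n ^ 3 * PP" using X4 unfolding PP_def by (simp add: mult_ac)
    also have "\<dots> \<le> 16 * (\<delta>^8 * real n) * real n ^ 3 * PP"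
    proof -
      have "96 \<le> 16 * (\<delta>^8 * real n)" using d8 by linarith
      then show ?thesis using PP0 by (intro mult_right_mono) auto
    qed
    also have "\<dots> = 16 * \<delta>^4 * (\<delta>^4 * real n ^ 4) * PP"
    proof -
      have e8: "\<delta>^8 = \<delta>^4 * \<delta>^4" by (simp flip: power_add)
      have e4: "real n ^ 4 = real n * real n ^ 3" by (simp flip: power_Suc)
      show ?thesis unfolding e8 e4 by (simp add: mult_ac)
    qed
    also have "\<dots> \<le> 16 * \<delta>^4 * PP * PP"
      using QP PP0 d0 by (intro mult_right_mono mult_left_mono) auto
    also have "\<dots> = (2 * \<delta> * u * w)^4"
    proof -
      have u4: "u^4 = u^2 * u^2" and w4: "w^4 = w^2 * w^2" by (simp_all flip: power_add)
      show ?thesis unfolding PP_def power_mult_distrib u4 w4 by (simp add: mult_ac)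
    qed
    finally have "\<bar>X\<bar>^Suc 3 \<le> (2 * \<delta> * u * w)^Suc 3" by simp
    then have aX: "\<bar>X\<bar> \<le> 2 * \<delta> * u * w"
      by (rule power_le_imp_le_base) (use d0 u0 w0 in simp)
    show "(1/2 - \<delta>) * real (card U) * real (card W) \<le> real (e_between E U W) \<and>
          real (e_between E U W) \<le> (1/2 + \<delta>) * real (card U) * real (card W)"
    proof -
      have l: "(1/2 - \<delta>) * u * w = u * w / 2 - \<delta> * u * w" by (simp add: algebra_simps)
      have r: "(1/2 + \<delta>) * u * w = u * w / 2 + \<delta> * u * w" by (simp add: algebra_simps)
      have "- (2 * \<delta> * u * w) \<le> X" "X \<le> 2 * \<delta> * u * w" using aX by (simp_all add: abs_le_iff)
      then show ?thesis unfolding u_def[symmetric] w_def[symmetric] l r using Xe by linarith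
    qed
  qed
qed


end
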